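(* Let $(A,B)$ be a definite pencil. If $0<\epsilon<\gamma(A,B)$, then $$\Lambda^{\mathrm{sym}}_\epsilon(A,B)=\left\{z\in\mathbb{C}:\ \sigma_{\min}(A-zB)\le\epsilon\sqrt{1+|z|^2}\right\}\cap\mathbb{R}.$$
   Context: A pencil $(A,B)$ of $n\times n$ complex matrices is definite if $A,B$ are Hermitian and $\gamma(A,B)=\min_{\|x\|_2=1}|x^H(A+iB)x|>0$. For $\epsilon>0$, the symmetric $\epsilon$-pseudospectrum is $\Lambda^{\mathrm{sym}}_\epsilon(A,B)=\{z\in\mathbb{C}:(A+E)u=z(B+F)u$ for some $u\ne0$ and Hermitian $E,F$ with $\sqrt{\|E\|_2^2+\|F\|_2^2}\le\epsilon\}$. $\sigma_{\min}$ denotes the smallest singular value. *)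

theory Defs
  imports "HOL-Analysis.Analysis"
begin

text \<open>n x n complex matrices are represented as complex^'n^'n (n = CARD('n));
  vectors as complex^'n with the Euclidean (2-)norm.\<close>

definition hermitian :: "complex^'n^'n \<Rightarrow> bool" where
  "hermitian M \<longleftrightarrow> (\<forall>i j. M $ i $ j = cnj (M $ j $ i))"

definition qform :: "complex^'n^'n \<Rightarrow> complex^'n \<Rightarrow> complex" where
  "qform M x = (\<Sum>i\<in>UNIV. \<Sum>j\<in>UNIV. cnj (x $ i) * M $ i $ j * x $ j)"

definition cmat_scale :: "complex \<Rightarrow> complex^'n^'n \<Rightarrow> complex^'n^'n" where
  "cmat_scale z M = (\<chi> i j. z * M $ i $ j)"

definition crawford :: "complex^'n^'n \<Rightarrow> complex^'n^'n \<Rightarrow> real" where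
  "crawford A B = Inf {cmod (qform (A + cmat_scale \<i> B) x) | x. norm x = 1}"

definition definite_pencil :: "complex^'n^'n \<Rightarrow> complex^'n^'n \<Rightarrow> bool" where
  "definite_pencil A B \<longleftrightarrow> hermitian A \<and> hermitian B \<and> crawford A B > 0"

definition norm2 :: "complex^'n^'n \<Rightarrow> real" where
  "norm2 E = onorm (\<lambda>x. E *v x)"

definition sigma_min :: "complex^'n^'n \<Rightarrow> real" where
  "sigma_min M = Inf {norm (M *v x) | x. norm x = 1}"

definition sym_pseudospectrum :: "real \<Rightarrow> complex^'n^'n \<Rightarrow> complex^'n^'n \<Rightarrow> complex set" where
  "sym_pseudospectrum \<epsilon> A B = {z. \<exists>E F u. u \<noteq> 0 \<and> hermitian E \<and> hermitian F \<and>
      sqrt ((norm2 E)\<^sup>2 + (norm2 F)\<^sup>2) \<le> \<epsilon> \<and>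
      (A + E) *v u = cmat_scale z (B + F) *v u}"

end

theory Submission imports Defs begin

lemma mv_add: "(M::complex^'n^'n) *v (x + y) = M *v x + M *v y"
  by (simp add: matrix_vector_right_distrib)

lemma mv_scaleR: "(M::complex^'n^'n) *v (t *\<^sub>R x) = t *\<^sub>R (M *v x)"
  by (simp add: vec_eq_iff matrix_vector_mult_def scaleR_sum_right)

lemma mv_linear: "linear (\<lambda>x. (M::complex^'n^'n) *v x)"
  by (rule linearI) (simp_all add: mv_add mv_scaleR)

lemma mv_bl: "bounded_linear (\<lambda>x. (M::complex^'n^'n) *v x)"
  using mv_linear linear_conv_bounded_linear by blast

lemma norm_mv_le: "norm ((M::complex^'n^'n) *v x) \<le> norm2 M * norm x"
  unfolding norm2_def using onorm[OF mv_bl] .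

lemma norm2_nonneg: "0 \<le> norm2 (M::complex^'n^'n)"
  unfolding norm2_def using onorm_pos_le[OF mv_bl] .

lemma cmat_scale_mv: "(cmat_scale z M *v x) $ i = z * ((M::complex^'n^'n) *v x) $ i"
  by (simp add: cmat_scale_def matrix_vector_mult_def sum_distrib_left mult.assoc)

lemma add_mv: "(((M::complex^'n^'n) + N) *v x) $ i = (M *v x) $ i + (N *v x) $ i"
  by (simp add: matrix_vector_mult_def sum.distrib algebra_simps)

lemma diff_mv: "(((M::complex^'n^'n) - N) *v x) $ i = (M *v x) $ i - (N *v x) $ i"
  by (simp add: matrix_vector_mult_def sum_subtractf algebra_simps)

lemma norm_cscale: "norm (\<chi> i. (z::complex) * v $ i) = cmod z * norm (v::complex^'n)"
  by (simp add: norm_vec_def norm_mult L2_set_right_distrib)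

lemma cmat_scale_mv_vec: "cmat_scale z M *v x = (\<chi> i. z * ((M::complex^'n^'n) *v x) $ i)"
  by (simp add: vec_eq_iff cmat_scale_mv)

lemma qform_alt: "qform M x = (\<Sum>i\<in>UNIV. cnj (x $ i) * ((M::complex^'n^'n) *v x) $ i)"
  by (simp add: qform_def matrix_vector_mult_def sum_distrib_left mult.assoc)

lemma Re_qform: "Re (qform M x) = inner ((M::complex^'n^'n) *v x) x"
  by (simp add: qform_alt inner_vec_def inner_complex_def Re_sum algebra_simps)

lemma herm_qform_real: assumes "hermitian (M::complex^'n^'n)"
  shows "qform M x = of_real (Re (qform M x))"
proof -
  have h: "\<And>i j. cnj (M$i$j) = M$j$i" using assms unfolding hermitian_def
    by (metis complex_cnj_cnj)
  have "cnj (qform M x) = (\<Sum>i\<in>UNIV. \<Sum>j\<in>UNIV. cnj (x$j) * M$j$i * x$i)"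
    unfolding qform_def by (simp add: h mult.commute mult.left_commute)
  also have "\<dots> = qform M x" unfolding qform_def by (rule sum.swap)
  finally have "cnj (qform M x) = qform M x" .
  then have "Im (qform M x) = 0" by (metis cnj.simps(2) neg_equal_zero)
  then show ?thesis by (simp add: complex_eq_iff)
qed

lemma abs_inner_mv: "\<bar>inner ((M::complex^'n^'n) *v x) x\<bar> \<le> norm2 M * (norm x)^2"
proof -
  have "\<bar>inner (M *v x) x\<bar> \<le> norm (M *v x) * norm x" by (rule Cauchy_Schwarz_ineq2)
  also have "\<dots> \<le> norm2 M * norm x * norm x"
    by (rule mult_right_mono[OF norm_mv_le]) simp
  finally show ?thesis by (simp add: power2_eq_square)
qed

lemma qform_add: "qform ((M::complex^'n^'n) + N) x = qform M x + qform N x"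
  by (simp add: qform_def distrib_left distrib_right sum.distrib)

lemma qform_scale: "qform (cmat_scale c (M::complex^'n^'n)) x = c * qform M x"
  by (simp add: qform_def cmat_scale_def sum_distrib_left mult.assoc mult.left_commute)

lemma herm_add: assumes "hermitian M" "hermitian N" shows "hermitian ((M::complex^'n^'n) + N)"
  unfolding hermitian_def
proof (intro allI)
  fix i j
  have "M$i$j = cnj (M$j$i)" "N$i$j = cnj (N$j$i)" using assms unfolding hermitian_def by blast+
  then show "(M + N)$i$j = cnj ((M + N)$j$i)" by simp
qed

lemma herm_diff_real: assumes "hermitian M" "hermitian N"
  shows "hermitian ((M::complex^'n^'n) - cmat_scale (of_real r) N)"
  unfolding hermitian_def
proof (intro allI)
  fix i j
  have "M$i$j = cnj (M$j$i)" "N$i$j = cnj (N$j$i)" using assms unfolding hermitian_def by blast+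
  then show "(M - cmat_scale (of_real r) N)$i$j = cnj ((M - cmat_scale (of_real r) N)$j$i)"
    by (simp add: cmat_scale_def)
qed

lemma inner_cvec: "inner (a::complex^'n) b = (\<Sum>i\<in>UNIV. Re (a$i * cnj (b$i)))"
  by (simp add: inner_vec_def inner_complex_def)

lemma herm_selfadj: assumes "hermitian (M::complex^'n^'n)"
  shows "inner (M *v x) y = inner x (M *v y)"
proof -
  have h: "\<And>i j. cnj (M$j$i) = M$i$j" using assms unfolding hermitian_def
    by (metis complex_cnj_cnj)
  have "inner (M *v x) y = (\<Sum>i\<in>UNIV. \<Sum>j\<in>UNIV. Re (M$i$j * x$j * cnj (y$i)))"
    by (simp add: inner_cvec matrix_vector_mult_def Re_sum sum_distrib_right)
  also have "\<dots> = (\<Sum>j\<in>UNIV. \<Sum>i\<in>UNIV. Re (M$i$j * x$j * cnj (y$i)))"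
    by (rule sum.swap)
  also have "\<dots> = (\<Sum>j\<in>UNIV. \<Sum>i\<in>UNIV. Re (x$j * cnj (M$j$i * y$i)))"
    by (simp add: h mult.commute mult.left_commute)
  also have "\<dots> = inner x (M *v y)"
    by (simp add: inner_cvec matrix_vector_mult_def Re_sum sum_distrib_left)
  finally show ?thesis .
qed


lemma norm_sq_cvec: "(norm (x::complex^'n))^2 = (\<Sum>i\<in>UNIV. (cmod (x$i))^2)"
  unfolding norm_vec_def L2_set_def by (rule real_sqrt_pow2) (simp add: sum_nonneg)

lemma sum_cnj_self: "(\<Sum>i\<in>UNIV. cnj ((x::complex^'n)$i) * x$i) = of_real ((norm x)^2)"
proof -
  have h: "cnj z * z = of_real ((cmod z)^2)" for z
    by (subst mult.commute) (rule complex_norm_square[symmetric])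
  show ?thesis unfolding norm_sq_cvec of_real_sum h ..
qed

lemma sm_bdd: "bdd_below {norm ((M::complex^'n^'n) *v x) | x. norm x = 1}"
  by (rule bdd_belowI[of _ 0]) auto

lemma sm_lower: "norm x = 1 \<Longrightarrow> sigma_min M \<le> norm ((M::complex^'n^'n) *v x)"
  unfolding sigma_min_def by (rule cInf_lower[OF _ sm_bdd]) auto

lemma sm_attained: "\<exists>x. norm x = 1 \<and> norm ((M::complex^'n^'n) *v x) = sigma_min M"
proof -
  have "sphere (0::complex^'n) 1 \<noteq> {}"
  proof -
    have "axis undefined 1 \<in> sphere (0::complex^'n) 1" by (simp add: norm_axis_1)
    then show ?thesis by blast
  qed
  moreover have "continuous_on (sphere 0 1) (\<lambda>x. norm (M *v x))"
    by (intro continuous_intros linear_continuous_on mv_bl)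
  ultimately obtain x where x: "x \<in> sphere 0 1" "\<forall>y\<in>sphere 0 1. norm (M *v x) \<le> norm (M *v y)"
    using continuous_attains_inf[OF compact_sphere] by blast
  have "norm (M *v x) \<le> sigma_min M"
    unfolding sigma_min_def
    by (rule cInf_greatest) (use x in auto)
  moreover have "sigma_min M \<le> norm (M *v x)" using x by (intro sm_lower) simp
  ultimately show ?thesis using x by (intro exI[of _ x]) auto
qed

lemma sm_nonneg: "0 \<le> sigma_min (M::complex^'n^'n)"
  using sm_attained[of M] by (metis norm_ge_zero)

lemma sm_scaled: "sigma_min (M::complex^'n^'n) * norm u \<le> norm (M *v u)"
proof (cases "u = 0")
  case True then show ?thesis by simp
next
  case False
  then have "norm u > 0" by simp
  have "sigma_min M \<le> norm (M *v ((1 / norm u) *\<^sub>R u))"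
    by (rule sm_lower) (use False in simp)
  also have "\<dots> = norm (M *v u) / norm u" by (simp add: mv_scaleR)
  finally show ?thesis using \<open>norm u > 0\<close> by (simp add: field_simps)
qed

lemma herm_eigen: assumes "hermitian (M::complex^'n^'n)"
  shows "\<exists>x l. norm x = 1 \<and> M *v x = l *\<^sub>R x \<and> \<bar>l\<bar> = sigma_min M"
proof -
  define s where "s = sigma_min M"
  have s0: "0 \<le> s" using sm_nonneg s_def by simp
  obtain x where x1: "norm x = 1" and xs: "norm (M *v x) = s"
    using sm_attained s_def by metis
  define r where "r = M *v (M *v x) - s^2 *\<^sub>R x"
  have key: "0 \<le> 2 * t * (norm r)^2 + t^2 * ((norm (M *v r))^2 - s^2 * (norm r)^2)" for t
  proof -
    have ineq: "s^2 * (norm (x + t *\<^sub>R r))^2 \<le> (norm (M *v (x + t *\<^sub>R r)))^2"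
      using sm_scaled[of M "x + t *\<^sub>R r"] s0 unfolding s_def[symmetric]
      by (metis mult_nonneg_nonneg norm_ge_zero power_mono power_mult_distrib)
    have m: "M *v (x + t *\<^sub>R r) = M *v x + t *\<^sub>R (M *v r)"
      by (simp add: mv_add mv_scaleR)
    have i1: "inner (M *v x) (M *v r) = inner (M *v (M *v x)) r"
      using herm_selfadj[OF assms] by simp
    have i2: "inner (M *v (M *v x)) r = (norm r)^2 + s^2 * inner x r"
    proof -
      have "inner r r = inner (M *v (M *v x) - s^2 *\<^sub>R x) r" by (simp add: r_def)
      then show ?thesis by (simp add: inner_diff_left power2_norm_eq_inner)
    qed
    have xx: "inner x x = 1" using x1 by (simp add: power2_norm_eq_inner[symmetric])
    have e1: "(norm (M *v x + t *\<^sub>R (M *v r)))^2 = s^2 + 2 * t * inner (M *v x) (M *v r) + t^2 * (norm (M *v r))^2"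
    proof -
      have ss: "s^2 = inner (M *v x) (M *v x)" using xs by (simp add: power2_norm_eq_inner[symmetric])
      show ?thesis unfolding power2_norm_eq_inner ss
        by (simp add: inner_add_left inner_add_right inner_commute algebra_simps power2_eq_square)
    qed
    have e2: "(norm (x + t *\<^sub>R r))^2 = 1 + 2 * t * inner x r + t^2 * (norm r)^2"
      unfolding power2_norm_eq_inner using xx
      by (simp add: inner_add_left inner_add_right inner_commute algebra_simps power2_eq_square)
    have "s^2 * (1 + 2 * t * inner x r + t^2 * (norm r)^2) \<le> s^2 + 2 * t * ((norm r)^2 + s^2 * inner x r) + t^2 * (norm (M *v r))^2"
      using ineq unfolding m e1 e2 i1 i2 .
    then show ?thesis by (simp add: algebra_simps)
  qed
  have "r = 0"
  proof (rule ccontr)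
    assume "r \<noteq> 0"
    define q where "q = (norm r)^2"
    define C where "C = (norm (M *v r))^2 - s^2 * (norm r)^2"
    have q0: "q > 0" using \<open>r \<noteq> 0\<close> q_def by simp
    define t where "t = - q / (\<bar>C\<bar> + 1)"
    have tneg: "t < 0" using q0 by (simp add: t_def divide_pos_pos add_pos_nonneg)
    have "0 \<le> 2 * t * q + t^2 * C" using key[of t] q_def C_def by simp
    then have "0 \<le> t * (2 * q + t * C)" by (simp add: algebra_simps power2_eq_square)
    then have "2 * q + t * C \<le> 0" using tneg by (simp add: mult_le_0_iff zero_le_mult_iff)
    moreover have "- (t * C) \<le> q"
    proof -
      have "- (t * C) \<le> \<bar>t\<bar> * \<bar>C\<bar>" by (simp add: abs_mult[symmetric])
      also have "\<dots> = q * \<bar>C\<bar> / (\<bar>C\<bar> + 1)" using q0 by (simp add: t_def abs_div)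
      also have "\<dots> \<le> q" using q0 by (simp add: divide_le_eq)
      finally show ?thesis .
    qed
    ultimately show False using q0 by linarith
  qed
  then have MM: "M *v (M *v x) = s^2 *\<^sub>R x" unfolding r_def by simp
  show ?thesis
  proof (cases "M *v x + s *\<^sub>R x = 0")
    case True
    then have "M *v x = (- s) *\<^sub>R x" by (simp add: eq_neg_iff_add_eq_0)
    then show ?thesis using x1 s0 s_def by (intro exI[of _ x] exI[of _ "-s"]) simp
  next
    case False
    define y where "y = M *v x + s *\<^sub>R x"
    have My: "M *v y = s *\<^sub>R y"
      unfolding y_def by (simp add: mv_add mv_scaleR MM power2_eq_square algebra_simps)
    have ny: "norm y > 0" using False y_def by simp
    show ?thesis
      apply (rule exI[of _ "(1 / norm y) *\<^sub>R y"], rule exI[of _ s])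
      using ny My s0 s_def by (simp add: mv_scaleR)
  qed
qed

definition rk1 :: "complex^'n \<Rightarrow> complex^'n^'n" where
  "rk1 x = (\<chi> i j. x$i * cnj (x$j))"

lemma rk1_herm: "hermitian (cmat_scale (of_real c) (rk1 x))"
  by (simp add: hermitian_def cmat_scale_def rk1_def)

lemma rk1_mv: "rk1 x *v u = (\<chi> i. x$i * (\<Sum>j\<in>UNIV. cnj (x$j) * u$j))"
  by (simp add: vec_eq_iff rk1_def matrix_vector_mult_def sum_distrib_left mult.assoc)

lemma rk1_mv_self: "norm x = 1 \<Longrightarrow> rk1 x *v x = x"
  by (simp add: rk1_mv sum_cnj_self vec_eq_iff)

lemma ccs: "cmod (\<Sum>j\<in>UNIV. cnj ((x::complex^'n)$j) * u$j) \<le> norm x * norm u"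
proof -
  have "cmod (\<Sum>j\<in>UNIV. cnj (x$j) * u$j) \<le> (\<Sum>j\<in>UNIV. cmod (x$j) * cmod (u$j))"
    by (rule order_trans[OF norm_sum]) (simp add: norm_mult)
  also have "\<dots> = inner (\<chi> j. cmod (x$j)) (\<chi> j. cmod (u$j))"
    by (simp add: inner_vec_def)
  also have "\<dots> \<le> norm (\<chi> j. cmod (x$j)) * norm (\<chi> j. cmod (u$j))"
    by (rule norm_cauchy_schwarz)
  also have "\<dots> = norm x * norm u" by (simp add: norm_vec_def)
  finally show ?thesis .
qed

lemma rk1_norm2: assumes "norm x = 1"
  shows "norm2 (cmat_scale c (rk1 x)) \<le> cmod c"
  unfolding norm2_def
proof (rule onorm_le)
  fix u
  have "norm (cmat_scale c (rk1 x) *v u) = cmod c * norm (rk1 x *v u)"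
    by (simp add: cmat_scale_mv_vec norm_cscale)
  also have "rk1 x *v u = (\<chi> i. (\<Sum>j\<in>UNIV. cnj (x$j) * u$j) * x$i)"
    by (simp add: rk1_mv mult.commute)
  also have "norm \<dots> = cmod (\<Sum>j\<in>UNIV. cnj (x$j) * u$j) * norm x"
    by (rule norm_cscale)
  also have "\<dots> \<le> norm u" using ccs[of x u] assms by simp
  finally show "norm (cmat_scale c (rk1 x) *v u) \<le> cmod c * norm u"
    by (simp add: mult_left_mono)
qed


lemma cs2: assumes "0 \<le> c" "0 \<le> f" "0 \<le> e"
  shows "c * f + e \<le> sqrt (1 + c^2) * sqrt (f^2 + e^2)"
proof -
  have "(c * f + e)^2 \<le> (1 + c^2) * (f^2 + e^2)"
  proof -
    have "0 \<le> (c * e - f)^2" by simp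
    then show ?thesis by (simp add: power2_eq_square algebra_simps)
  qed
  then have "c * f + e \<le> sqrt ((1 + c^2) * (f^2 + e^2))" by (rule real_le_rsqrt)
  then show ?thesis by (simp add: real_sqrt_mult)
qed

lemma cmod_re_im: "cmod (complex_of_real a + \<i> * complex_of_real b) = sqrt (a^2 + b^2)"
  by (simp add: cmod_def)

lemma sq_le_of_abs: "\<bar>a::real\<bar> \<le> b \<Longrightarrow> a^2 \<le> b^2"
  by (metis abs_ge_zero abs_le_square_iff abs_of_nonneg order_trans)

lemma crawford_lower: "norm x = 1 \<Longrightarrow> crawford A B \<le> cmod (qform (A + cmat_scale \<i> B) x)"
  unfolding crawford_def by (rule cInf_lower) (auto intro!: bdd_belowI[of _ 0])

lemma subset_dir:
  fixes A B :: "complex^'n^'n" and \<epsilon> :: real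
  assumes "definite_pencil A B" and "0 < \<epsilon>" and "\<epsilon> < crawford A B"
    and "z \<in> sym_pseudospectrum \<epsilon> A B"
  shows "z \<in> \<real> \<and> sigma_min (A - cmat_scale z B) \<le> \<epsilon> * sqrt (1 + (cmod z)\<^sup>2)"
proof -
  have hA: "hermitian A" and hB: "hermitian B" using assms(1) by (auto simp: definite_pencil_def)
  obtain E F u where u0: "u \<noteq> 0" and hE: "hermitian E" and hF: "hermitian F"
    and nEF: "sqrt ((norm2 E)\<^sup>2 + (norm2 F)\<^sup>2) \<le> \<epsilon>"
    and equ: "(A + E) *v u = cmat_scale z (B + F) *v u"
    using assms(4) unfolding sym_pseudospectrum_def by blast
  define x where "x = (1 / norm u) *\<^sub>R u"
  have x1: "norm x = 1" using u0 by (simp add: x_def)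
  have eqx: "(A + E) *v x = cmat_scale z (B + F) *v x"
    unfolding x_def mv_scaleR equ ..
  define a where "a = qform (A + E) x"
  define b where "b = qform (B + F) x"
  have ab: "a = z * b"
    unfolding a_def b_def qform_scale[symmetric] by (simp add: qform_alt eqx)
  have areal: "a = of_real (Re a)" unfolding a_def by (rule herm_qform_real[OF herm_add[OF hA hE]])
  have breal: "b = of_real (Re b)" unfolding b_def by (rule herm_qform_real[OF herm_add[OF hB hF]])
  define eE where "eE = Re (qform E x)"
  define eF where "eF = Re (qform F x)"
  have qE: "qform E x = of_real eE" unfolding eE_def by (rule herm_qform_real[OF hE])
  have qF: "qform F x = of_real eF" unfolding eF_def by (rule herm_qform_real[OF hF])
  have bE: "\<bar>eE\<bar> \<le> norm2 E" using abs_inner_mv[of E x] x1 unfolding eE_def Re_qform by simp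
  have bF: "\<bar>eF\<bar> \<le> norm2 F" using abs_inner_mv[of F x] x1 unfolding eF_def Re_qform by simp
  have small: "cmod (qform E x + \<i> * qform F x) \<le> \<epsilon>"
  proof -
    have "cmod (qform E x + \<i> * qform F x) = sqrt (eE^2 + eF^2)" unfolding qE qF by (rule cmod_re_im)
    also have "\<dots> \<le> sqrt ((norm2 E)\<^sup>2 + (norm2 F)\<^sup>2)"
      using sq_le_of_abs[OF bE] sq_le_of_abs[OF bF] by simp
    finally show ?thesis using nEF by simp
  qed
  have sumq: "a + \<i> * b = qform (A + cmat_scale \<i> B) x + (qform E x + \<i> * qform F x)"
    unfolding a_def b_def by (simp add: qform_add qform_scale algebra_simps)
  have "crawford A B \<le> cmod (qform (A + cmat_scale \<i> B) x)" by (rule crawford_lower[OF x1])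
  moreover have "cmod (qform (A + cmat_scale \<i> B) x) \<le> cmod (a + \<i> * b) + cmod (qform E x + \<i> * qform F x)"
    unfolding sumq by (metis add_diff_cancel_right' norm_triangle_ineq4)
  ultimately have "a + \<i> * b \<noteq> 0" using small assms(3) by auto
  then have b0: "b \<noteq> 0" using ab by auto
  have zr: "z = of_real (Re a / Re b)"
    using ab b0 areal breal by (metis nonzero_mult_div_cancel_right of_real_divide)
  then have zR: "z \<in> \<real>" by simp
  define r where "r = Re a / Re b"
  have mv: "(A - cmat_scale z B) *v x = (\<chi> i. z * (F *v x) $ i) - E *v x"
  proof -
    have "\<And>i. (A *v x)$i + (E *v x)$i = z * ((B *v x)$i + (F *v x)$i)"
      using eqx by (simp add: vec_eq_iff add_mv cmat_scale_mv)
    then show ?thesis by (simp add: vec_eq_iff diff_mv cmat_scale_mv algebra_simps)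
  qed
  have "sigma_min (A - cmat_scale z B) \<le> norm ((A - cmat_scale z B) *v x)" by (rule sm_lower[OF x1])
  also have "\<dots> \<le> cmod z * norm (F *v x) + norm (E *v x)"
    unfolding mv by (metis norm_cscale norm_triangle_ineq4)
  also have "\<dots> \<le> cmod z * norm2 F + norm2 E"
    using norm_mv_le[of F x] norm_mv_le[of E x] x1 by (simp add: add_mono mult_left_mono)
  also have "\<dots> \<le> sqrt (1 + (cmod z)^2) * sqrt ((norm2 F)^2 + (norm2 E)^2)"
    by (rule cs2) (simp_all add: norm2_nonneg)
  also have "\<dots> \<le> sqrt (1 + (cmod z)^2) * \<epsilon>"
    using nEF by (simp add: add.commute mult_left_mono)
  finally show ?thesis using zR by (simp add: mult.commute)
qed


lemma supset_dir:
  fixes A B :: "complex^'n^'n" and \<epsilon> :: real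
  assumes "definite_pencil A B" and "0 < \<epsilon>"
    and zR: "z \<in> \<real>" and sm: "sigma_min (A - cmat_scale z B) \<le> \<epsilon> * sqrt (1 + (cmod z)\<^sup>2)"
  shows "z \<in> sym_pseudospectrum \<epsilon> A B"
proof -
  have hA: "hermitian A" and hB: "hermitian B" using assms(1) by (auto simp: definite_pencil_def)
  obtain r where zr: "z = of_real r" using zR by (auto elim: Reals_cases)
  define M where "M = A - cmat_scale z B"
  have hM: "hermitian M" unfolding M_def zr by (rule herm_diff_real[OF hA hB])
  obtain x l where x1: "norm x = 1" and Mx: "M *v x = l *\<^sub>R x" and ls: "\<bar>l\<bar> = sigma_min M"
    using herm_eigen[OF hM] by blast
  have d0: "1 + r^2 > 0" by (simp add: add_pos_nonneg)
  define c where "c = l / (1 + r^2)"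
  have lc: "l = c * (1 + r^2)" using d0 by (simp add: c_def)
  define E where "E = cmat_scale (of_real (- c)) (rk1 x)"
  define F where "F = cmat_scale (of_real (r * c)) (rk1 x)"
  have hE: "hermitian E" unfolding E_def by (rule rk1_herm)
  have hF: "hermitian F" unfolding F_def by (rule rk1_herm)
  have x0: "x \<noteq> 0" using x1 by auto
  have nE: "norm2 E \<le> \<bar>c\<bar>" unfolding E_def using rk1_norm2[OF x1, of "of_real (- c)"] by simp
  have nF: "norm2 F \<le> \<bar>r * c\<bar>" unfolding F_def using rk1_norm2[OF x1, of "of_real (r * c)"]
    by (simp only: norm_of_real)
  have "(norm2 E)\<^sup>2 + (norm2 F)\<^sup>2 \<le> c^2 + (r * c)^2"
  proof -
    have "(norm2 E)\<^sup>2 \<le> \<bar>c\<bar>^2" by (rule power_mono[OF nE norm2_nonneg])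
    moreover have "(norm2 F)\<^sup>2 \<le> \<bar>r * c\<bar>^2" by (rule power_mono[OF nF norm2_nonneg])
    ultimately show ?thesis by simp
  qed
  also have "\<dots> = c^2 * (1 + r^2)" by (simp add: power_mult_distrib algebra_simps)
  also have "\<dots> = l^2 / (1 + r^2)"
  proof -
    have "l^2 / (1 + r^2) = c^2 * ((1 + r^2) * (1 + r^2)) / (1 + r^2)"
      unfolding lc power_mult_distrib by (simp add: power2_eq_square[of "1 + r^2"])
    also have "\<dots> = c^2 * (1 + r^2)" using d0 by simp
    finally show ?thesis by simp
  qed
  also have "\<dots> \<le> \<epsilon>^2"
  proof -
    have "\<bar>l\<bar> \<le> \<epsilon> * sqrt (1 + r^2)" using ls sm unfolding M_def zr by simp
    then have "l^2 \<le> (\<epsilon> * sqrt (1 + r^2))^2" by (rule sq_le_of_abs)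
    also have "\<dots> = \<epsilon>^2 * (1 + r^2)" using d0 by (simp add: power_mult_distrib)
    finally show ?thesis using d0 by (simp add: divide_le_eq)
  qed
  finally have nn: "sqrt ((norm2 E)\<^sup>2 + (norm2 F)\<^sup>2) \<le> \<epsilon>"
    using assms(2) by (metis abs_of_pos real_sqrt_abs real_sqrt_le_mono)
  have eq: "(A + E) *v x = cmat_scale z (B + F) *v x"
  proof -
    have "\<And>i. (A *v x)$i - z * (B *v x)$i = of_real l * x$i"
    proof -
      fix i
      have "(M *v x)$i = l *\<^sub>R (x$i)" using Mx by simp
      then show "(A *v x)$i - z * (B *v x)$i = of_real l * x$i"
        unfolding M_def by (simp add: diff_mv cmat_scale_mv scaleR_conv_of_real)
    qed
    moreover have "\<And>i. (E *v x)$i = of_real (- c) * x$i" "\<And>i. (F *v x)$i = of_real (r * c) * x$i"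
      unfolding E_def F_def by (simp_all add: cmat_scale_mv rk1_mv_self[OF x1])
    ultimately show ?thesis unfolding zr lc
      by (simp add: vec_eq_iff add_mv cmat_scale_mv algebra_simps eq_diff_eq power2_eq_square)
  qed
  show ?thesis unfolding sym_pseudospectrum_def
    using x0 hE hF nn eq by blast
qed

theorem lemma2p5:
  fixes A B :: "complex^'n^'n" and \<epsilon> :: real
  assumes "definite_pencil A B"
    and "0 < \<epsilon>" and "\<epsilon> < crawford A B"
  shows "sym_pseudospectrum \<epsilon> A B =
    {z. sigma_min (A - cmat_scale z B) \<le> \<epsilon> * sqrt (1 + (cmod z)\<^sup>2)} \<inter> \<real>"
  using subset_dir[OF assms] supset_dir[OF assms(1,2)] by blast

end
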